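(* For every integer $N\ge16$ there is $C<\infty$ such that: (a) for every interval $Q$, $\int_Q M(\mathbf 1_Q\widehat{\dot\sigma})^2\,d\widehat\omega\le C\,\widehat{\dot\sigma}(Q)$, where $M\mu(x)=\sup_{J\ni x}\mu(J)/|J|$ (sup over intervals $J$ containing $x$); and (b) for every interval $I_0$ and every decomposition $I_0=\bigcup_{r\ge1}I_r$ into pairwise disjoint intervals, $\sum_{r\ge1}\widehat\omega(I_r)\,\mathrm P(I_r,\mathbf 1_{I_0}\widehat{\dot\sigma})^2\le C\,\widehat{\dot\sigma}(I_0)$.
   Context: $\mathrm P(I,\mu)=\int_{\mathbb R}\frac{|I|}{(|I|+\operatorname{dist}(x,I))^2}\,d\mu(x)$. Cantor intervals: fix an integer $N\ge16$. Set $I^0_1=[0,1]$. Each interval $I=[a,a+N^{-k}]$ of generation $k$ has two children of generation $k+1$: the left child $I_-=[a,a+N^{-k-1}]$ and the right child $I_+=[a+N^{-k}-N^{-k-1},a+N^{-k}]$. The $2^k$ intervals of generation $k$ are denoted $I^k_j$, $1\le j\le 2^k$, numbered left to right; $\mathcal D$ is the collection of all of them. $\dot z^k_j$ is the center of $I^k_j$. The Cantor set is $\mathsf E^{(N)}=\bigcap_{k}\bigcup_{j}I^k_j$. Redistributed Cantor measure: with $\eta=1/N$, $\widehat\omega$ is the unique Borel probability measure supported on $\mathsf E^{(N)}$ such that $\widehat\omega(I^1_1)=\widehat\omega(I^1_2)=\frac12$ and for every $I\in\mathcal D$ of generation $\ge1$: if $I$ is the left child of its parent then $\widehat\omega(I_-)=\frac{1+\eta}2\widehat\omega(I)$,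 $\widehat\omega(I_+)=\frac{1-\eta}2\widehat\omega(I)$; if $I$ is the right child of its parent then $\widehat\omega(I_-)=\frac{1-\eta}2\widehat\omega(I)$, $\widehat\omega(I_+)=\frac{1+\eta}2\widehat\omega(I)$. Weights: $\widehat s^k_j=N^{-2k}/\widehat\omega(I^k_j)$; $\widehat{\dot\sigma}=\sum_{k\ge0}\sum_{j=1}^{2^k}\widehat s^k_j\,\delta_{\dot z^k_j}$. *)

theory Defs
  imports "HOL-Analysis.Analysis"
begin

section \<open>Cantor intervals (generation k, index j with 0 \<le> j < 2^k, numbered left to right)\<close>

text \<open>Left endpoint of the interval of generation k with (0-based) index j.
  The children of (k,j) are (k+1,2j) (left child) and (k+1,2j+1) (right child).\<close>
fun cleft :: "nat \<Rightarrow> nat \<Rightarrow> nat \<Rightarrow> real" where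
  "cleft N 0 j = 0"
| "cleft N (Suc k) j =
     cleft N k (j div 2) + (if odd j then 1 / real N ^ k - 1 / real N ^ Suc k else 0)"

definition cint :: "nat \<Rightarrow> nat \<Rightarrow> nat \<Rightarrow> real set" where
  "cint N k j = {cleft N k j .. cleft N k j + 1 / real N ^ k}"

definition ccenter :: "nat \<Rightarrow> nat \<Rightarrow> nat \<Rightarrow> real" where
  "ccenter N k j = cleft N k j + 1 / (2 * real N ^ k)"

definition cidx :: "(nat \<times> nat) set" where
  "cidx = {(k, j). j < 2 ^ k}"

definition cantor_set :: "nat \<Rightarrow> real set" where
  "cantor_set N = (\<Inter>k. \<Union>j\<in>{..<2 ^ k}. cint N k j)"

definition redist_cantor :: "nat \<Rightarrow> real measure \<Rightarrow> bool" where
  "redist_cantor N W \<longleftrightarrow>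
     sets W = sets borel \<and> emeasure W UNIV = 1 \<and>
     emeasure W (UNIV - cantor_set N) = 0 \<and>
     measure W (cint N 1 0) = 1/2 \<and> measure W (cint N 1 1) = 1/2 \<and>
     (\<forall>k\<ge>1. \<forall>j<2 ^ k.
        (even j \<longrightarrow>
           measure W (cint N (Suc k) (2*j)) = (1 + 1/real N) / 2 * measure W (cint N k j) \<and>
           measure W (cint N (Suc k) (2*j+1)) = (1 - 1/real N) / 2 * measure W (cint N k j)) \<and>
        (odd j \<longrightarrow>
           measure W (cint N (Suc k) (2*j)) = (1 - 1/real N) / 2 * measure W (cint N k j) \<and>
           measure W (cint N (Suc k) (2*j+1)) = (1 + 1/real N) / 2 * measure W (cint N k j)))"

section \<open>The weighted measure sigma-dot (sum of point masses at the centers)\<close>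

definition sweight :: "nat \<Rightarrow> real measure \<Rightarrow> nat \<Rightarrow> nat \<Rightarrow> real" where
  "sweight N W k j = (1 / real N ^ (2 * k)) / measure W (cint N k j)"

definition sdot :: "nat \<Rightarrow> real measure \<Rightarrow> real measure" where
  "sdot N W = density (count_space UNIV)
      (\<lambda>x. infsum (\<lambda>(k, j). ennreal (sweight N W k j))
                  {(k, j) \<in> cidx. ccenter N k j = x})"

definition interval :: "real set \<Rightarrow> bool" where
  "interval J \<longleftrightarrow> is_interval J \<and> bounded J"

definition ilen :: "real set \<Rightarrow> real" where
  "ilen J = (if J = {} then 0 else Sup J - Inf J)"

definition restr :: "real measure \<Rightarrow> real set \<Rightarrow> real measure" where
  "restr \<mu> Q = density \<mu> (indicator Q)"

definition maxfn :: "real measure \<Rightarrow> real \<Rightarrow> ennreal" where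
  "maxfn \<mu> x = (SUP J \<in> {J. interval J \<and> x \<in> J \<and> ilen J > 0}. emeasure \<mu> J / ennreal (ilen J))"

definition poisson :: "real set \<Rightarrow> real measure \<Rightarrow> ennreal" where
  "poisson I \<mu> = (\<integral>\<^sup>+ x. ennreal (ilen I / (ilen I + infdist x I)\<^sup>2) \<partial>\<mu>)"

end

theory Submission
  imports Defs
begin

lemma ennreal_suminf_swap:
  fixes f :: "nat \<Rightarrow> nat \<Rightarrow> ennreal"
  shows "(\<Sum>i. \<Sum>j. f i j) = (\<Sum>j. \<Sum>i. f i j)"
proof -
  have "(\<Sum>i. \<Sum>j. f i j) = (\<integral>\<^sup>+i. \<integral>\<^sup>+j. f i j \<partial>count_space UNIV \<partial>count_space UNIV)"
    by (simp add: nn_integral_count_space_nat)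
  also have "\<dots> = (\<integral>\<^sup>+j. \<integral>\<^sup>+i. f i j \<partial>count_space UNIV \<partial>count_space UNIV)"
    by (rule nn_integral_count_space_nn_integral) auto
  also have "\<dots> = (\<Sum>j. \<Sum>i. f i j)"
    by (simp add: nn_integral_count_space_nat)
  finally show ?thesis .
qed

lemma ennreal_le_suminf_single:
  fixes f :: "nat \<Rightarrow> ennreal"
  shows "f n \<le> (\<Sum>i. f i)"
  using sum_le_suminf[OF summableI, of "{n}" f] by simp

lemma geom_ennreal:
  fixes V r :: real
  assumes "0 \<le> V" "0 \<le> r" "r < 1"
  shows "(\<Sum>d. ennreal (V * r^d)) = ennreal (V / (1 - r))"
proof -
  have s: "summable (\<lambda>d. r^d)" using assms by (intro summable_geometric) simp
  have "(\<Sum>d. ennreal (V * r^d)) = ennreal (\<Sum>d. V * r^d)"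
    using assms s by (intro suminf_ennreal2 summable_mult) auto
  also have "(\<Sum>d. V * r^d) = V / (1 - r)"
    using suminf_mult[OF s, of V] suminf_geometric[of r] assms by simp
  finally show ?thesis .
qed

lemma shift_zero:
  fixes f :: "nat \<Rightarrow> ennreal"
  assumes "\<And>k. k < m \<Longrightarrow> f k = 0"
  shows "(\<Sum>k. f k) = (\<Sum>d. f (d + m))"
  using suminf_offset[OF summableI, of f m] assms by simp

lemma sum_divide_ennreal: "(\<Sum>i\<in>A. f i) / (c::ennreal) = (\<Sum>i\<in>A. f i / c)"
  unfolding divide_ennreal_def by (simp add: sum_distrib_right)

lemma interval_dist_le:
  assumes "interval J" "x \<in> J" "y \<in> J"
  shows "\<bar>x - y\<bar> \<le> ilen J"
proof -
  have b: "bdd_above J" "bdd_below J" using assms(1) unfolding interval_def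
    by (auto intro: bounded_imp_bdd_above bounded_imp_bdd_below)
  have "x \<le> Sup J" "y \<le> Sup J" "Inf J \<le> x" "Inf J \<le> y"
    using assms(2,3) b by (auto intro: cSup_upper cInf_lower)
  then show ?thesis unfolding ilen_def using assms(2) by auto
qed

locale cantorN =
  fixes N :: nat
  assumes N16: "16 \<le> N"
begin

lemma Npos: "real N > 0" using N16 by simp
lemma Nge: "real N \<ge> 16" using N16 by simp

lemma cleft_even[simp]: "cleft N (Suc k) (2*j) = cleft N k j"
  by simp

lemma cleft_odd[simp]: "cleft N (Suc k) (2*j+1) = cleft N k j + 1/real N^k - 1/real N^Suc k"
  by simp

lemma powN_pos: "(1::real)/real N^k > 0" using Npos by simp

lemma powN_Suc: "(1::real)/real N^Suc k = (1/real N^k) / real N"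
  by simp

lemma child_sub: "cint N (Suc k) j \<subseteq> cint N k (j div 2)"
proof -
  have h: "1/real N^Suc k \<le> 1/real N^k" "1/real N^Suc k > 0"
    using Npos Nge by (auto simp: divide_simps)
  show ?thesis using h unfolding cint_def by (auto simp: algebra_simps)
qed

lemma desc_sub: "cint N (m+d) j \<subseteq> cint N m (j div 2^d)"
proof (induction d arbitrary: j)
  case 0 then show ?case by simp
next
  case (Suc d)
  have "cint N (m + Suc d) j \<subseteq> cint N (m+d) (j div 2)" using child_sub[of "m+d" j] by simp
  also have "\<dots> \<subseteq> cint N m (j div 2 div 2^d)" by (rule Suc.IH)
  also have "j div 2 div 2^d = j div 2^Suc d" by (simp add: div_mult2_eq mult.commute)
  finally show ?case .
qed

lemma center_in: "ccenter N k j \<in> cint N k j"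
  using powN_pos[of k] unfolding cint_def ccenter_def by (auto simp: divide_simps)

definition gap :: "nat \<Rightarrow> real" where "gap k = (1/2 - 1/real N) / real N^k"

lemma gap_pos: "gap k > 0" using Nge unfolding gap_def by (auto simp: divide_simps)

lemma left_child: assumes "y \<in> cint N (Suc k) (2*j)" shows "y + gap k \<le> ccenter N k j"
proof -
  define u where "u = 1/real N^k"
  have u: "u > 0" "1/real N^Suc k = u / real N" using powN_pos[of k] by (auto simp: u_def)
  have "y \<le> cleft N k j + u / real N" using assms u unfolding cint_def by simp
  moreover have "gap k = u/2 - u/real N" unfolding gap_def u_def using Npos by (simp add: field_simps)
  moreover have "ccenter N k j = cleft N k j + u/2" unfolding ccenter_def u_def by simp
  ultimately show ?thesis by simp
qed

lemma right_child: assumes "y \<in> cint N (Suc k) (2*j+1)" shows "ccenter N k j + gap k \<le> y"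
proof -
  define u where "u = 1/real N^k"
  have u: "u > 0" "1/real N^Suc k = u / real N" using powN_pos[of k] by (auto simp: u_def)
  have "cleft N k j + u - u / real N \<le> y" using assms u unfolding cint_def by (simp add: u_def mult.commute)
  moreover have "gap k = u/2 - u/real N" unfolding gap_def u_def using Npos by (simp add: field_simps)
  moreover have "ccenter N k j = cleft N k j + u/2" unfolding ccenter_def u_def by simp
  ultimately show ?thesis by simp
qed


lemma child_cases: "(j::nat) = 2*(j div 2) \<or> j = 2*(j div 2)+1" by presburger

lemma sibling_sep:
  assumes "y \<in> cint N (Suc k) j" "z \<in> cint N (Suc k) j'" "j div 2 = j' div 2" "j \<noteq> j'"
  shows "(y + gap k \<le> ccenter N k (j div 2) \<and> ccenter N k (j div 2) + gap k \<le> z) \<or>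
         (z + gap k \<le> ccenter N k (j div 2) \<and> ccenter N k (j div 2) + gap k \<le> y)"
proof -
  have "j = 2*(j div 2) \<and> j' = 2*(j div 2)+1 \<or> j = 2*(j div 2)+1 \<and> j' = 2*(j div 2)"
    using assms(3,4) child_cases[of j] child_cases[of j'] by auto
  then show ?thesis
  proof
    assume h: "j = 2*(j div 2) \<and> j' = 2*(j div 2)+1"
    show ?thesis using left_child[of y k "j div 2"] right_child[of z k "j div 2"] assms(1,2) h by metis
  next
    assume h: "j = 2*(j div 2)+1 \<and> j' = 2*(j div 2)"
    show ?thesis using left_child[of z k "j div 2"] right_child[of y k "j div 2"] assms(1,2) h by metis
  qed
qed

lemma div_bound: "(j::nat) < 2^(m+d) \<Longrightarrow> j div 2^d < 2^m"
  by (simp add: less_mult_imp_div_less power_add)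

lemma disj: "j < 2^k \<Longrightarrow> j' < 2^k \<Longrightarrow> j \<noteq> j' \<Longrightarrow> cint N k j \<inter> cint N k j' = {}"
proof (induction k arbitrary: j j')
  case 0 then show ?case by simp
next
  case (Suc k)
  show ?case
  proof (cases "j div 2 = j' div 2")
    case True
    show ?thesis
    proof (rule ccontr)
      assume "cint N (Suc k) j \<inter> cint N (Suc k) j' \<noteq> {}"
      then obtain y where "y \<in> cint N (Suc k) j" "y \<in> cint N (Suc k) j'" by auto
      from sibling_sep[OF this True Suc.prems(3)] gap_pos[of k] show False by auto
    qed
  next
    case False
    have "j div 2 < 2^k" "j' div 2 < 2^k" using Suc.prems div_bound[of j k 1] div_bound[of j' k 1] by auto
    then have "cint N k (j div 2) \<inter> cint N k (j' div 2) = {}" using Suc.IH False by blast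
    then show ?thesis using child_sub[of k j] child_sub[of k j'] by blast
  qed
qed

lemma E_ex: "x \<in> cantor_set N \<Longrightarrow> \<exists>j<2^k. x \<in> cint N k j"
  unfolding cantor_set_def by blast

definition pos :: "nat \<Rightarrow> real \<Rightarrow> nat" where
  "pos k x = (THE j. j < 2^k \<and> x \<in> cint N k j)"

lemma pos_uniq: "j < 2^k \<Longrightarrow> x \<in> cint N k j \<Longrightarrow> pos k x = j"
  unfolding pos_def
  by (rule the_equality) (use disj in blast)+

lemma pos_in: assumes "x \<in> cantor_set N" shows "pos k x < 2^k" "x \<in> cint N k (pos k x)"
proof -
  obtain j where "j < 2^k" "x \<in> cint N k j" using E_ex[OF assms] by blast
  then show "pos k x < 2^k" "x \<in> cint N k (pos k x)" using pos_uniq by auto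
qed

lemma pos_div: assumes "x \<in> cantor_set N" shows "pos (m+d) x div 2^d = pos m x"
proof -
  have "x \<in> cint N m (pos (m+d) x div 2^d)" using desc_sub pos_in[OF assms, of "m+d"] by blast
  moreover have "pos (m+d) x div 2^d < 2^m" using div_bound pos_in[OF assms] by blast
  ultimately show ?thesis using pos_uniq by metis
qed

lemma pos_Suc: assumes "x \<in> cantor_set N" shows "pos (Suc m) x div 2 = pos m x"
  using pos_div[OF assms, of m 1] by simp

lemma KG:
  assumes E: "x \<in> cantor_set N" and j: "j < 2^k" and l: "l \<le> k"
    and a: "j div 2^(k-l) = pos l x"
    and b: "l = k \<or> j div 2^(k - Suc l) \<noteq> pos (Suc l) x"
  shows "(x \<le> ccenter N l (pos l x) \<and> ccenter N l (pos l x) \<le> ccenter N k j \<or>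
          ccenter N k j \<le> ccenter N l (pos l x) \<and> ccenter N l (pos l x) \<le> x)
         \<and> gap l \<le> \<bar>x - ccenter N k j\<bar>"
proof -
  define P where "P = pos l x"
  define P' where "P' = pos (Suc l) x"
  have xP': "x \<in> cint N (Suc l) P'" using pos_in[OF E] P'_def by blast
  have P'P: "P' div 2 = P" using pos_Suc[OF E] P_def P'_def by simp
  show ?thesis
  proof (cases "l = k")
    case True
    then have jP: "j = P" using a P_def by simp
    have "P' = 2*P \<or> P' = 2*P+1" using child_cases[of P'] P'P by auto
    then show ?thesis
    proof
      assume "P' = 2*P"
      then have "x + gap l \<le> ccenter N l P" using left_child xP' by blast
      then show ?thesis using True jP P_def gap_pos[of l] by auto
    next
      assume "P' = 2*P+1"
      then have "ccenter N l P + gap l \<le> x" using right_child xP' by blast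
      then show ?thesis using True jP P_def gap_pos[of l] by auto
    qed
  next
    case False
    define q where "q = j div 2^(k - Suc l)"
    have qne: "q \<noteq> P'" using b False q_def P'_def by simp
    have kk: "k = Suc l + (k - Suc l)" using l False by simp
    have "ccenter N k j \<in> cint N (Suc l) q"
      using center_in[of k j] desc_sub[of "Suc l" "k - Suc l" j] kk q_def by (metis subsetD)
    moreover have "q div 2 = P"
    proof -
      have "q div 2 = j div (2^(k - Suc l) * 2)" by (simp add: q_def div_mult2_eq)
      also have "2^(k - Suc l) * 2 = (2::nat)^(k - l)" using l False
        by (metis Suc_diff_Suc le_neq_implies_less power_Suc2)
      finally show ?thesis using a P_def by simp
    qed
    ultimately have "(ccenter N k j + gap l \<le> ccenter N l P \<and> ccenter N l P + gap l \<le> x) \<or>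
         (x + gap l \<le> ccenter N l P \<and> ccenter N l P + gap l \<le> ccenter N k j)"
      using sibling_sep[of "ccenter N k j" l q x P'] xP' P'P qne by auto
    then show ?thesis using gap_pos[of l] P_def by auto
  qed
qed

lemma center_inj_le:
  assumes "j < 2^k" "j' < 2^k'" "k \<le> k'" "ccenter N k j = ccenter N k' j'"
  shows "k = k' \<and> j = j'"
proof -
  define d where "d = k' - k"
  have k': "k' = k + d" using assms(3) d_def by simp
  have c'in: "ccenter N k' j' \<in> cint N k (j' div 2^d)"
    using center_in[of k' j'] desc_sub[of k d j'] k' by blast
  have jj: "j' div 2^d = j"
  proof (rule ccontr)
    assume ne: "j' div 2^d \<noteq> j"
    have "j' div 2^d < 2^k" using div_bound assms(2) k' by blast
    then have "cint N k j \<inter> cint N k (j' div 2^d) = {}" using disj assms(1) ne by metis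
    then show False using c'in center_in[of k j] assms(4) by auto
  qed
  show ?thesis
  proof (cases d)
    case 0 then show ?thesis using jj k' by simp
  next
    case (Suc e)
    define q where "q = j' div 2^e"
    have "ccenter N k' j' \<in> cint N (Suc k) q"
      using center_in[of k' j'] desc_sub[of "Suc k" e j'] k' Suc q_def by auto
    moreover have "q div 2 = j" using jj Suc q_def by (metis div_mult2_eq power_Suc2)
    moreover have "q = 2*(q div 2) \<or> q = 2*(q div 2)+1" by (rule child_cases)
    ultimately have "ccenter N k' j' + gap k \<le> ccenter N k j \<or> ccenter N k j + gap k \<le> ccenter N k' j'"
      using left_child right_child by metis
    then show ?thesis using assms(4) gap_pos[of k] by auto
  qed
qed

lemma center_inj:
  assumes "j < 2^k" "j' < 2^k'" "ccenter N k j = ccenter N k' j'"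
  shows "k = k' \<and> j = j'"
  using center_inj_le[OF assms(1,2) _ assms(3)] center_inj_le[OF assms(2,1) _ assms(3)[symmetric]]
  by (metis nat_le_linear)

lemma cint_closed: "closed (cint N k j)" unfolding cint_def by simp

lemma E_closed: "closed (cantor_set N)"
  unfolding cantor_set_def using cint_closed by (intro closed_INT closed_UN) auto

lemma E_sub0: "cantor_set N \<subseteq> cint N 0 0"
proof
  fix x assume "x \<in> cantor_set N"
  then obtain j where "j < 2^0" "x \<in> cint N 0 j" using E_ex by blast
  then show "x \<in> cint N 0 0" by simp
qed

end

definition cc :: "nat \<Rightarrow> real" where "cc N = (1 - 1/real N)/2"

locale cantorW = cantorN +
  fixes W :: "real measure"
  assumes RW: "redist_cantor N W"
begin

definition om :: "nat \<Rightarrow> nat \<Rightarrow> real" where "om k j = measure W (cint N k j)"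

lemma setsW: "sets W = sets borel" using RW unfolding redist_cantor_def by simp
lemma spaceW: "space W = UNIV" using sets_eq_imp_space_eq[OF setsW] by simp

lemma finW: "finite_measure W"
  using RW spaceW unfolding redist_cantor_def by (intro finite_measureI) auto

lemma cint_sets[measurable]: "cint N k j \<in> sets W"
  using setsW cint_closed by (simp add: borel_closed)

lemma E_sets: "cantor_set N \<in> sets W"
  using setsW E_closed by (simp add: borel_closed)

lemma emeasure_cint: "emeasure W (cint N k j) = ennreal (om k j)"
  unfolding om_def using finite_measure.emeasure_eq_measure[OF finW] by simp

lemma om_nonneg: "om k j \<ge> 0" unfolding om_def by simp

lemma nullE: "UNIV - cantor_set N \<in> null_sets W"
  using RW E_sets setsW spaceW unfolding redist_cantor_def null_sets_def by auto

lemma AE_E: "AE x in W. x \<in> cantor_set N"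
  using nullE by (rule AE_I') (auto simp: spaceW)

lemma om00: "om 0 0 = 1"
proof -
  have U: "emeasure W UNIV = 1" using RW unfolding redist_cantor_def by simp
  have "emeasure W UNIV \<le> emeasure W (cint N 0 0) + emeasure W (UNIV - cint N 0 0)"
    by (metis Diff_partition emeasure_subadditive cint_sets sets.top spaceW sets.Diff subset_UNIV)
  also have "emeasure W (UNIV - cint N 0 0) \<le> emeasure W (UNIV - cantor_set N)"
    using E_sub0 nullE by (intro emeasure_mono) (auto simp: null_sets_def)
  also have "emeasure W (UNIV - cantor_set N) = 0" using nullE by auto
  finally have "1 \<le> emeasure W (cint N 0 0)" using U by simp
  moreover have "emeasure W (cint N 0 0) \<le> 1" using U
    by (metis emeasure_space spaceW)
  ultimately show ?thesis using emeasure_cint[of 0 0] by (simp add: antisym)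
qed

lemma cc_le: "cc N \<le> 1/2" "cc N > 0" "cc N \<le> (1 + 1/real N)/2"
  using Nge unfolding cc_def by (auto simp: field_simps)

lemma child_om0: "j < 2^k \<Longrightarrow> om (Suc k) (2*j) \<ge> cc N * om k j \<and> om (Suc k) (2*j+1) \<ge> cc N * om k j"
proof (cases k)
  case 0
  assume "j < 2^k"
  then have "j = 0" using 0 by simp
  moreover have "om 1 0 = 1/2" "om 1 1 = 1/2" using RW unfolding redist_cantor_def om_def by auto
  ultimately show ?thesis using 0 om00 cc_le by simp
next
  case (Suc k')
  assume j: "j < 2^k"
  have h: "k \<ge> 1" using Suc by simp
  from RW h j have R: "(even j \<longrightarrow>
           om (Suc k) (2*j) = (1 + 1/real N) / 2 * om k j \<and>
           om (Suc k) (2*j+1) = (1 - 1/real N) / 2 * om k j) \<and>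
        (odd j \<longrightarrow>
           om (Suc k) (2*j) = (1 - 1/real N) / 2 * om k j \<and>
           om (Suc k) (2*j+1) = (1 + 1/real N) / 2 * om k j)"
    unfolding redist_cantor_def om_def by blast
  have "cc N * om k j \<le> (1 + 1/real N) / 2 * om k j" using cc_le om_nonneg mult_right_mono by blast
  moreover have "(1 - 1/real N) / 2 = cc N" unfolding cc_def by simp
  ultimately show ?thesis using R by (cases "even j") auto
qed

lemma child_om: assumes "j < 2^Suc k" shows "om (Suc k) j \<ge> cc N * om k (j div 2)"
proof -
  have "j div 2 < 2^k" using assms by simp
  from child_om0[OF this] have "om (Suc k) (2*(j div 2)) \<ge> cc N * om k (j div 2) \<and>
     om (Suc k) (2*(j div 2)+1) \<ge> cc N * om k (j div 2)" .
  then show ?thesis using child_cases[of j] by (cases "j = 2*(j div 2)") auto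
qed

lemma om_pos: "j < 2^k \<Longrightarrow> om k j > 0"
proof (induction k arbitrary: j)
  case 0 then show ?case using om00 by simp
next
  case (Suc k)
  have "om k (j div 2) > 0" using Suc div_bound[of j k 1] by simp
  then have "cc N * om k (j div 2) > 0" using cc_le by simp
  then show ?case using child_om[OF Suc.prems] by linarith
qed

lemma om_desc: "j < 2^(m+d) \<Longrightarrow> om (m+d) j \<ge> cc N ^ d * om m (j div 2^d)"
proof (induction d arbitrary: j)
  case 0 then show ?case by simp
next
  case (Suc d)
  have j2: "j div 2 < 2^(m+d)" using Suc.prems div_bound[of j "m+d" 1] by simp
  have "cc N ^ Suc d * om m (j div 2^Suc d) = cc N * (cc N ^ d * om m (j div 2 div 2^d))"
    by (simp add: div_mult2_eq)
  also have "\<dots> \<le> cc N * om (m+d) (j div 2)"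
    using Suc.IH[OF j2] cc_le by (simp add: mult_left_mono)
  also have "\<dots> \<le> om (m + Suc d) j" using child_om[of j "m+d"] Suc.prems by simp
  finally show ?case .
qed

definition sw :: "nat \<Rightarrow> nat \<Rightarrow> real" where "sw k j = sweight N W k j"

lemma sw_eq: "sw k j = (1/real N^k)^2 / om k j"
  unfolding sw_def sweight_def om_def by (simp add: power_mult power2_eq_square power_mult_distrib)

lemma sw_nonneg: "sw k j \<ge> 0" unfolding sw_eq using om_nonneg by simp

lemma sdot_point:
  "(\<Sum>k. \<Sum>j<2^k. ennreal (sw k j) * g (ccenter N k j) * indicator {ccenter N k j} x)
   = infsum (\<lambda>(k, j). ennreal (sweight N W k j)) {(k, j) \<in> cidx. ccenter N k j = x} * g x"
proof (cases "\<exists>k0 j0. j0 < 2^k0 \<and> ccenter N k0 j0 = x")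
  case True
  then obtain k0 j0 where kj: "j0 < 2^k0" "ccenter N k0 j0 = x" by blast
  have fib: "{(k, j) \<in> cidx. ccenter N k j = x} = {(k0, j0)}"
    using kj center_inj unfolding cidx_def by auto
  have tm: "ennreal (sw k j) * g (ccenter N k j) * indicator {ccenter N k j} x
        = (if k = k0 \<and> j = j0 then ennreal (sw k0 j0) * g x else 0)" if "j < 2^k" for k j
  proof (cases "ccenter N k j = x")
    case True
    then have "k = k0 \<and> j = j0" using center_inj[OF that kj(1)] kj(2) by simp
    then show ?thesis using True by simp
  next
    case False
    then have "\<not> (k = k0 \<and> j = j0)" using kj(2) by auto
    then show ?thesis using False by (simp only: if_False indicator_simps mult_zero_right, simp)
  qed
  have inner: "(\<Sum>j<2^k. ennreal (sw k j) * g (ccenter N k j) * indicator {ccenter N k j} x)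
      = (if k = k0 then ennreal (sw k0 j0) * g x else 0)" for k
  proof -
    have "(\<Sum>j<2^k. ennreal (sw k j) * g (ccenter N k j) * indicator {ccenter N k j} x)
        = (\<Sum>j<2^k. (if k = k0 \<and> j = j0 then ennreal (sw k0 j0) * g x else 0))"
      by (rule sum.cong) (auto simp: tm)
    also have "\<dots> = (if k = k0 then ennreal (sw k0 j0) * g x else 0)"
    proof (cases "k = k0")
      case True
      then show ?thesis using kj(1) by (simp add: sum.delta)
    qed simp
    finally show ?thesis .
  qed
  have "(\<Sum>k. \<Sum>j<2^k. ennreal (sw k j) * g (ccenter N k j) * indicator {ccenter N k j} x)
       = (\<Sum>k. if k = k0 then ennreal (sw k0 j0) * g x else 0)"
    by (simp only: inner)
  also have "\<dots> = ennreal (sw k0 j0) * g x"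
    using sums_single[of k0 "\<lambda>_. ennreal (sw k0 j0) * g x"] sums_unique by metis
  finally show ?thesis using fib by (simp add: sw_def)
next
  case False
  then have fib: "{(k, j) \<in> cidx. ccenter N k j = x} = {}" unfolding cidx_def by auto
  have "ennreal (sw k j) * g (ccenter N k j) * indicator {ccenter N k j} x = 0" if "j < 2^k" for k j
    using False that by (auto simp: indicator_def)
  then have "(\<Sum>j<2^k. ennreal (sw k j) * g (ccenter N k j) * indicator {ccenter N k j} x) = 0" for k
    by (intro sum.neutral) auto
  then have "(\<Sum>k. \<Sum>j<2^k. ennreal (sw k j) * g (ccenter N k j) * indicator {ccenter N k j} x) = 0"
    by (simp only: suminf_zero)
  then show ?thesis using fib by (simp only: infsum_empty mult_zero_left)
qed

lemma sdot_int: "(\<integral>\<^sup>+ x. g x \<partial>sdot N W) = (\<Sum>k. \<Sum>j<2^k. ennreal (sw k j) * g (ccenter N k j))"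
proof -
  have "(\<integral>\<^sup>+ x. g x \<partial>sdot N W) = (\<integral>\<^sup>+ x. infsum (\<lambda>(k, j). ennreal (sweight N W k j))
           {(k, j) \<in> cidx. ccenter N k j = x} * g x \<partial>count_space UNIV)"
    unfolding sdot_def by (rule nn_integral_density) auto
  also have "\<dots> = (\<integral>\<^sup>+ x. (\<Sum>k. \<Sum>j<2^k. ennreal (sw k j) * g (ccenter N k j) * indicator {ccenter N k j} x) \<partial>count_space UNIV)"
    by (simp only: sdot_point)
  also have "\<dots> = (\<Sum>k. \<integral>\<^sup>+ x. (\<Sum>j<2^k. ennreal (sw k j) * g (ccenter N k j) * indicator {ccenter N k j} x) \<partial>count_space UNIV)"
    by (rule nn_integral_suminf) auto
  also have "\<dots> = (\<Sum>k. \<Sum>j<2^k. \<integral>\<^sup>+ x. ennreal (sw k j) * g (ccenter N k j) * indicator {ccenter N k j} x \<partial>count_space UNIV)"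
    by (subst nn_integral_sum) auto
  also have "\<dots> = (\<Sum>k. \<Sum>j<2^k. ennreal (sw k j) * g (ccenter N k j))"
    by (subst nn_integral_cmult_indicator) auto
  finally show ?thesis .
qed

lemma sdot_emeasure: "emeasure (sdot N W) A = (\<Sum>k. \<Sum>j<2^k. ennreal (sw k j) * indicator A (ccenter N k j))"
proof -
  have "emeasure (sdot N W) A = (\<integral>\<^sup>+ x. indicator A x \<partial>sdot N W)"
    by (rule nn_integral_indicator[symmetric]) (simp add: sdot_def)
  then show ?thesis by (simp add: sdot_int)
qed

lemma restr_int: "(\<integral>\<^sup>+ x. g x \<partial>restr (sdot N W) Q) = (\<integral>\<^sup>+ x. indicator Q x * g x \<partial>sdot N W)"
  unfolding restr_def by (rule nn_integral_density) (auto simp: sdot_def)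

lemma restr_emeasure: "emeasure (restr (sdot N W) Q) J = (\<Sum>k. \<Sum>j<2^k. ennreal (sw k j) * indicator (Q \<inter> J) (ccenter N k j))"
proof -
  have "emeasure (restr (sdot N W) Q) J = (\<integral>\<^sup>+ x. indicator J x \<partial>restr (sdot N W) Q)"
    by (rule nn_integral_indicator[symmetric]) (simp add: sdot_def restr_def)
  also have "\<dots> = (\<integral>\<^sup>+ x. indicator (Q \<inter> J) x \<partial>sdot N W)"
    unfolding restr_int by (rule nn_integral_cong) (auto simp: indicator_def)
  finally show ?thesis by (simp add: sdot_int)
qed

definition aa :: "nat \<Rightarrow> nat \<Rightarrow> real" where "aa k j = (1/real N^k) / om k j"

definition Tq :: "real set \<Rightarrow> real \<Rightarrow> ennreal" where
  "Tq Q x = (\<Sum>k. \<Sum>j<2^k. ennreal (sw k j) * (indicator Q (ccenter N k j) * ennreal (1 / \<bar>x - ccenter N k j\<bar>)))"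

definition Bq :: "real set \<Rightarrow> real \<Rightarrow> ennreal" where
  "Bq Q x = (\<Sum>k. \<Sum>j<2^k. ennreal ((aa k j)^2) * indicator Q (ccenter N k j) * indicator (cint N k j) x)"

lemma Bq_meas[measurable]: "Bq Q \<in> borel_measurable W"
  unfolding Bq_def by measurable

lemma Bq_int: "(\<integral>\<^sup>+ x. Bq Q x \<partial>W) = emeasure (sdot N W) Q"
proof -
  have "(\<integral>\<^sup>+ x. Bq Q x \<partial>W) = (\<Sum>k. \<integral>\<^sup>+ x. (\<Sum>j<2^k. ennreal ((aa k j)^2) * indicator Q (ccenter N k j) * indicator (cint N k j) x) \<partial>W)"
    unfolding Bq_def by (rule nn_integral_suminf) measurable
  also have "\<dots> = (\<Sum>k. \<Sum>j<2^k. \<integral>\<^sup>+ x. ennreal ((aa k j)^2) * indicator Q (ccenter N k j) * indicator (cint N k j) x \<partial>W)"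
    by (subst nn_integral_sum) auto
  also have "\<dots> = (\<Sum>k. \<Sum>j<2^k. ennreal ((aa k j)^2) * indicator Q (ccenter N k j) * ennreal (om k j))"
    by (subst nn_integral_cmult_indicator) (auto simp: emeasure_cint)
  also have "\<dots> = (\<Sum>k. \<Sum>j<2^k. ennreal (sw k j) * indicator Q (ccenter N k j))"
  proof (intro suminf_cong sum.cong refl)
    fix k j assume "j \<in> {..<(2::nat)^k}"
    then have p: "om k j > 0" using om_pos by simp
    have "(aa k j)^2 * om k j = sw k j" unfolding aa_def sw_eq using p
      by (simp add: power2_eq_square field_simps)
    then have "ennreal ((aa k j)^2) * ennreal (om k j) = ennreal (sw k j)"
      using p by (simp add: ennreal_mult[symmetric])
    then show "ennreal ((aa k j)^2) * indicator Q (ccenter N k j) * ennreal (om k j) = ennreal (sw k j) * indicator Q (ccenter N k j)"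
      by (metis mult.commute mult.left_commute)
  qed
  finally show ?thesis by (simp add: sdot_emeasure)
qed

lemma sw_desc:
  assumes j: "j < 2^(m+d)"
  shows "sw (m+d) j \<le> sw m (j div 2^d) * (1/(real N^2 * cc N))^d"
proof -
  define P where "P = j div 2^d"
  have P: "P < 2^m" using div_bound j P_def by blast
  have op: "om m P > 0" using om_pos[OF P] .
  have c: "cc N > 0" using cc_le by simp
  have o: "om (m+d) j \<ge> cc N ^ d * om m P" using om_desc[OF j] P_def by simp
  have o2: "cc N ^ d * om m P > 0" using op c by simp
  have "sw (m+d) j = (1/real N^(m+d))^2 / om (m+d) j" by (rule sw_eq)
  also have "\<dots> \<le> (1/real N^(m+d))^2 / (cc N ^ d * om m P)"
    using o o2 by (intro divide_left_mono) auto
  also have "\<dots> = ((1/real N^m)^2 / om m P) * (1/(real N^2 * cc N))^d"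
    using Npos op c by (simp add: field_simps power_add power_mult_distrib power2_eq_square)
  also have "\<dots> = sw m P * (1/(real N^2 * cc N))^d" by (simp add: sw_eq)
  finally show ?thesis using P_def by simp
qed

lemma card_fiber: "card {j. j < 2^(m+d) \<and> j div 2^d = (P::nat)} \<le> 2^d"
proof -
  have "{j. j < 2^(m+d) \<and> j div 2^d = P} \<subseteq> {P * 2^d ..< P * 2^d + 2^d}"
  proof
    fix j assume "j \<in> {j. j < 2^(m+d) \<and> j div 2^d = P}"
    then have jP: "j div 2^d = P" by simp
    have e: "j = P * 2^d + j mod 2^d" using div_mult_mod_eq[of j "2^d"] jP by (simp add: mult.commute)
    have m: "j mod 2^d < (2::nat)^d" by simp
    show "j \<in> {P * 2^d ..< P * 2^d + 2^d}" unfolding atLeastLessThan_iff using e m by linarith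
  qed
  then have "card {j. j < 2^(m+d) \<and> j div 2^d = P} \<le> card {P * 2^d ..< P * 2^d + (2::nat)^d}"
    by (intro card_mono) auto
  then show ?thesis by simp
qed

lemma const_bound: "(1/2 - 1/real N) * (1 - 4/(real N * (real N - 1))) \<ge> 1/3"
proof -
  have a: "1/2 - 1/real N \<ge> 7/16" using Nge by (simp add: field_simps)
  have "real N * (real N - 1) \<ge> 16 * 15" using Nge by (intro mult_mono) auto
  then have "4/(real N * (real N - 1)) \<le> 4/(16*15)" by (intro divide_left_mono) auto
  then have b: "1 - 4/(real N * (real N - 1)) \<ge> 59/60" by simp
  have "(7/16::real) * (59/60) \<le> (1/2 - 1/real N) * (1 - 4/(real N * (real N - 1)))"
    using a b by (intro mult_mono) auto
  then show ?thesis by simp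
qed

lemma r_eq: "2 * (1/(real N^2 * cc N)) = 4/(real N * (real N - 1))"
  using Nge unfolding cc_def by (simp add: field_simps power2_eq_square)

lemma r_bound: "4/(real N * (real N - 1)) < 1" "0 \<le> 4/(real N * (real N - 1))"
proof -
  have "real N * (real N - 1) \<ge> 16 * 15" using Nge by (intro mult_mono) auto
  then show "4/(real N * (real N - 1)) < 1" "0 \<le> 4/(real N * (real N - 1))" by (auto simp: field_simps)
qed

context
  fixes x :: real
  assumes xE: "x \<in> cantor_set N"
begin

definition lv :: "nat \<Rightarrow> nat \<Rightarrow> nat" where
  "lv k j = Max {m. m \<le> k \<and> j div 2^(k-m) = pos m x}"

lemma lv_props:
  assumes j: "j < 2^k"
  shows "lv k j \<le> k" "j div 2^(k - lv k j) = pos (lv k j) x"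
    "lv k j = k \<or> j div 2^(k - Suc (lv k j)) \<noteq> pos (Suc (lv k j)) x"
proof -
  define S where "S = {m. m \<le> k \<and> j div 2^(k-m) = pos m x}"
  have fin: "finite S" unfolding S_def by auto
  have "0 \<in> S" using j pos_in(1)[OF xE, of 0] unfolding S_def by simp
  then have ne: "S \<noteq> {}" by auto
  have "lv k j \<in> S" unfolding lv_def S_def[symmetric] using Max_in[OF fin ne] .
  then show "lv k j \<le> k" "j div 2^(k - lv k j) = pos (lv k j) x" unfolding S_def by auto
  show "lv k j = k \<or> j div 2^(k - Suc (lv k j)) \<noteq> pos (Suc (lv k j)) x"
  proof (rule ccontr)
    assume "\<not> ?thesis"
    then have "Suc (lv k j) \<in> S" using \<open>lv k j \<in> S\<close> unfolding S_def by auto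
    then have "Suc (lv k j) \<le> lv k j" unfolding lv_def S_def[symmetric] using Max_ge[OF fin] by blast
    then show False by simp
  qed
qed

definition H :: "nat \<Rightarrow> real set \<Rightarrow> nat \<Rightarrow> nat \<Rightarrow> ennreal" where
  "H m Q k j = indicator Q (ccenter N m (pos m x)) *
     ennreal (if m \<le> k \<and> j div 2^(k-m) = pos m x then sw k j / gap m else 0)"

lemma term_bound:
  assumes Q: "is_interval Q" "x \<in> Q" and j: "j < 2^k"
  shows "ennreal (sw k j) * (indicator Q (ccenter N k j) * ennreal (1 / \<bar>x - ccenter N k j\<bar>)) \<le> (\<Sum>m. H m Q k j)"
proof -
  define l where "l = lv k j"
  note L = lv_props[OF j, folded l_def]
  note G = KG[OF xE j L(1) L(2) L(3)]
  have gl: "gap l \<le> \<bar>x - ccenter N k j\<bar>" using G by simp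
  have "ennreal (sw k j) * (indicator Q (ccenter N k j) * ennreal (1 / \<bar>x - ccenter N k j\<bar>)) \<le> H l Q k j"
  proof (cases "ccenter N k j \<in> Q")
    case True
    have "ccenter N l (pos l x) \<in> Q"
      using G True Q unfolding is_interval_1 by blast
    moreover have "sw k j * (1 / \<bar>x - ccenter N k j\<bar>) \<le> sw k j / gap l"
      using gl gap_pos[of l] sw_nonneg[of k j]
      by (simp add: divide_simps mult_left_mono)
    ultimately show ?thesis using True L(1,2) sw_nonneg[of k j]
      unfolding H_def by (simp add: ennreal_mult[symmetric] ennreal_leI)
  next
    case False then show ?thesis by simp
  qed
  also have "\<dots> \<le> (\<Sum>m. H m Q k j)" by (rule ennreal_le_suminf_single)
  finally show ?thesis .
qed


lemma group_bound:
  "(\<Sum>k. \<Sum>j<2^k. H m Q k j) \<le> indicator Q (ccenter N m (pos m x)) * ennreal (3 * aa m (pos m x))"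
proof -
  define P where "P = pos m x"
  have P: "P < 2^m" using pos_in(1)[OF xE] P_def by simp
  have op: "om m P > 0" using om_pos[OF P] .
  define h where "h k j = (if m \<le> k \<and> j div 2^(k-m) = P then sw k j / gap m else 0)" for k j
  define q where "q = 1/(real N^2 * cc N)"
  define r where "r = 4/(real N * (real N - 1))"
  define V where "V = sw m P / gap m"
  have q0: "q \<ge> 0" unfolding q_def using cc_le by simp
  have V0: "V \<ge> 0" unfolding V_def using sw_nonneg gap_pos[of m] by simp
  have h0: "h k j \<ge> 0" for k j unfolding h_def using sw_nonneg gap_pos[of m] by simp
  have HH: "H m Q k j = indicator Q (ccenter N m P) * ennreal (h k j)" for k j
    unfolding H_def h_def P_def by simp
  have sumh: "(\<Sum>j<2^k. h k j) \<le> (if m \<le> k then V * r^(k-m) else 0)" for k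
  proof (cases "m \<le> k")
    case False
    then show ?thesis unfolding h_def by simp
  next
    case True
    define d where "d = k - m"
    have k: "k = m + d" using True d_def by simp
    have "(\<Sum>j<2^k. h k j) = (\<Sum>j\<in>{j. j < 2^(m+d) \<and> j div 2^d = P}. sw (m+d) j / gap m)"
      unfolding h_def k by (simp add: sum.If_cases Int_def conj_commute lessThan_def)
    also have "\<dots> \<le> (\<Sum>j\<in>{j. j < 2^(m+d) \<and> j div 2^d = P}. V * q^d)"
    proof (rule sum_mono)
      fix j assume "j \<in> {j. j < 2^(m+d) \<and> j div 2^d = P}"
      then have j: "j < 2^(m+d)" "j div 2^d = P" by auto
      have "sw (m+d) j \<le> sw m P * q^d" using sw_desc[OF j(1)] j(2) q_def by simp
      then show "sw (m+d) j / gap m \<le> V * q^d" unfolding V_def using gap_pos[of m]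
        by (simp add: divide_right_mono field_simps)
    qed
    also have "\<dots> = card {j. j < 2^(m+d) \<and> j div 2^d = P} * (V * q^d)" by simp
    also have "\<dots> \<le> 2^d * (V * q^d)"
      using card_fiber[of m d P] V0 q0 by (intro mult_right_mono) (auto simp del: of_nat_power simp: of_nat_le_iff[symmetric])
    also have "\<dots> = V * r^d" using r_eq unfolding q_def r_def by (simp add: power_mult_distrib[symmetric])
    finally show ?thesis using True d_def by simp
  qed
  have "(\<Sum>k. \<Sum>j<2^k. H m Q k j) = indicator Q (ccenter N m P) * (\<Sum>k. ennreal (\<Sum>j<2^k. h k j))"
    by (simp add: HH sum_distrib_left[symmetric] h0 sum_ennreal)
  also have "(\<Sum>k. ennreal (\<Sum>j<2^k. h k j)) \<le> (\<Sum>k. ennreal (if m \<le> k then V * r^(k-m) else 0))"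
  proof (rule suminf_le)
    fix k show "ennreal (\<Sum>j<2^k. h k j) \<le> ennreal (if m \<le> k then V * r^(k-m) else 0)"
      by (rule ennreal_leI[OF sumh])
  qed auto
  also have "\<dots> = (\<Sum>d. ennreal (V * r^d))"
    by (subst shift_zero[of m]) auto
  also have "\<dots> = ennreal (V / (1 - r))"
    using V0 r_bound unfolding r_def by (intro geom_ennreal) auto
  also have "V / (1 - r) \<le> 3 * aa m P"
  proof -
    have g: "gap m = (1/2 - 1/real N) * (1/real N^m)" unfolding gap_def by simp
    have V: "V = aa m P / (1/2 - 1/real N)"
      unfolding V_def g sw_eq aa_def using Npos op by (simp add: field_simps power2_eq_square)
    have pos1: "1/2 - 1/real N > 0" using Nge by (simp add: field_simps)
    have pos2: "1 - r > 0" using r_bound unfolding r_def by simp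
    have a0: "aa m P \<ge> 0" unfolding aa_def using op by simp
    have "V / (1 - r) = aa m P / ((1/2 - 1/real N) * (1 - r))" unfolding V by simp
    also have "\<dots> \<le> aa m P / (1/3)"
      using const_bound a0 pos1 pos2 unfolding r_def by (intro divide_left_mono) auto
    finally show ?thesis by simp
  qed
  then have "ennreal (V / (1 - r)) \<le> ennreal (3 * aa m P)" by (rule ennreal_leI)
  finally show ?thesis using P_def by (simp add: mult_left_mono)
qed


lemma T_bound:
  assumes Q: "is_interval Q" "x \<in> Q"
  shows "Tq Q x \<le> (\<Sum>m. indicator Q (ccenter N m (pos m x)) * ennreal (3 * aa m (pos m x)))"
proof -
  have "Tq Q x \<le> (\<Sum>k. \<Sum>j<2^k. \<Sum>m. H m Q k j)"
    unfolding Tq_def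
  proof (rule suminf_le)
    fix k
    show "(\<Sum>j<2^k. ennreal (sw k j) * (indicator Q (ccenter N k j) * ennreal (1 / \<bar>x - ccenter N k j\<bar>)))
          \<le> (\<Sum>j<2^k. \<Sum>m. H m Q k j)"
      by (rule sum_mono) (use term_bound[OF Q] in auto)
  qed auto
  also have "\<dots> = (\<Sum>k. \<Sum>m. \<Sum>j<2^k. H m Q k j)"
    by (subst suminf_sum) auto
  also have "\<dots> = (\<Sum>m. \<Sum>k. \<Sum>j<2^k. H m Q k j)"
    by (rule ennreal_suminf_swap)
  also have "\<dots> \<le> (\<Sum>m. indicator Q (ccenter N m (pos m x)) * ennreal (3 * aa m (pos m x)))"
    by (intro suminf_le group_bound) auto
  finally show ?thesis .
qed

lemma aa_nonneg: "aa k j \<ge> 0" unfolding aa_def using om_nonneg by simp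

lemma am_decay: "aa (Suc m) (pos (Suc m) x) \<le> (2/15) * aa m (pos m x)"
proof -
  define P where "P = pos m x"
  define P' where "P' = pos (Suc m) x"
  have P': "P' < 2^Suc m" using pos_in(1)[OF xE, of "Suc m"] P'_def by simp
  have P: "P < 2^m" using pos_in(1)[OF xE] P_def by simp
  have op: "om m P > 0" using om_pos[OF P] .
  have c: "cc N > 0" using cc_le by simp
  have o: "om (Suc m) P' \<ge> cc N * om m P" using child_om[OF P'] pos_Suc[OF xE] P_def P'_def by simp
  have o2: "cc N * om m P > 0" using op c by simp
  have "aa (Suc m) P' = (1/real N^Suc m) / om (Suc m) P'" by (simp add: aa_def)
  also have "\<dots> \<le> (1/real N^Suc m) / (cc N * om m P)"
    using o o2 by (intro divide_left_mono) auto
  also have "\<dots> = aa m P * (2 / (real N - 1))"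
    unfolding aa_def cc_def using Npos Nge op by (simp add: field_simps)
  also have "\<dots> \<le> aa m P * (2/15)"
    using aa_nonneg[of m P] Nge by (intro mult_left_mono) (auto simp: field_simps)
  finally show ?thesis using P_def P'_def by (simp add: mult.commute)
qed

lemma am_decay_pow: "aa (m0+d) (pos (m0+d) x) \<le> (2/15)^d * aa m0 (pos m0 x)"
proof (induction d)
  case 0 then show ?case by simp
next
  case (Suc d)
  have "aa (m0 + Suc d) (pos (m0 + Suc d) x) \<le> (2/15) * aa (m0+d) (pos (m0+d) x)"
    using am_decay[of "m0+d"] by simp
  also have "\<dots> \<le> (2/15) * ((2/15)^d * aa m0 (pos m0 x))"
    using Suc.IH by (intro mult_left_mono) auto
  finally show ?case by simp
qed

lemma MAIN:
  assumes Q: "is_interval Q" "x \<in> Q"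
  shows "(Tq Q x)^2 \<le> 16 * Bq Q x"
proof (cases "\<exists>m. ccenter N m (pos m x) \<in> Q")
  case False
  then have "Tq Q x \<le> 0" using T_bound[OF Q] by simp
  then show ?thesis by simp
next
  case True
  define m0 where "m0 = (LEAST m. ccenter N m (pos m x) \<in> Q)"
  have m0Q: "ccenter N m0 (pos m0 x) \<in> Q" using True m0_def by (metis LeastI)
  define A where "A = aa m0 (pos m0 x)"
  have A0: "A \<ge> 0" using aa_nonneg A_def by simp
  have "Tq Q x \<le> (\<Sum>m. indicator Q (ccenter N m (pos m x)) * ennreal (3 * aa m (pos m x)))"
    by (rule T_bound[OF Q])
  also have "\<dots> \<le> (\<Sum>m. ennreal (if m0 \<le> m then (3 * A) * (2/15)^(m-m0) else 0))"
  proof (rule suminf_le)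
    fix m
    show "indicator Q (ccenter N m (pos m x)) * ennreal (3 * aa m (pos m x))
          \<le> ennreal (if m0 \<le> m then (3 * A) * (2/15)^(m-m0) else 0)"
    proof (cases "m0 \<le> m")
      case False
      then have "ccenter N m (pos m x) \<notin> Q" using m0_def not_less_Least by (metis not_le)
      then show ?thesis by simp
    next
      case True
      have "aa m (pos m x) \<le> (2/15)^(m-m0) * A"
        using am_decay_pow[of m0 "m-m0"] True A_def by simp
      then have "ennreal (3 * aa m (pos m x)) \<le> ennreal ((3 * A) * (2/15)^(m-m0))"
        by (intro ennreal_leI) (simp add: mult.commute)
      moreover have "indicator Q (ccenter N m (pos m x)) * ennreal (3 * aa m (pos m x)) \<le> ennreal (3 * aa m (pos m x))"
        by (simp add: indicator_def)
      ultimately show ?thesis using True by simp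
    qed
  qed auto
  also have "\<dots> = (\<Sum>d. ennreal ((3 * A) * (2/15)^d))"
    by (subst shift_zero[of m0]) auto
  also have "\<dots> = ennreal ((3 * A) / (1 - 2/15))"
    using A0 by (intro geom_ennreal) auto
  also have "\<dots> \<le> ennreal (4 * A)" using A0 by (intro ennreal_leI) simp
  finally have T: "Tq Q x \<le> ennreal (4 * A)" .
  have "(Tq Q x)^2 \<le> (ennreal (4 * A))^2" using T by (intro power_mono) auto
  also have "\<dots> = 16 * ennreal (A^2)" using A0 by (simp add: ennreal_power[symmetric] power_mult_distrib ennreal_mult)
  also have "ennreal (A^2) \<le> Bq Q x"
  proof -
    have p: "pos m0 x < 2^m0" "x \<in> cint N m0 (pos m0 x)" using pos_in[OF xE] by auto
    have "ennreal (A^2) = ennreal ((aa m0 (pos m0 x))^2) * indicator Q (ccenter N m0 (pos m0 x)) * indicator (cint N m0 (pos m0 x)) x"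
      using m0Q p A_def by simp
    also have "\<dots> \<le> (\<Sum>j<2^m0. ennreal ((aa m0 j)^2) * indicator Q (ccenter N m0 j) * indicator (cint N m0 j) x)"
      using p by (intro member_le_sum) auto
    also have "\<dots> \<le> Bq Q x" unfolding Bq_def by (rule ennreal_le_suminf_single)
    finally show ?thesis .
  qed
  finally show ?thesis by (simp add: mult_left_mono)
qed


lemma dist_pos: "j < 2^k \<Longrightarrow> 0 < \<bar>x - ccenter N k j\<bar>"
  using KG[OF xE _ lv_props] gap_pos by (meson order_less_le_trans)

lemma max_le_T:
  assumes "x \<in> Q"
  shows "maxfn (restr (sdot N W) Q) x \<le> Tq Q x"
  unfolding maxfn_def
proof (rule SUP_least)
  fix J assume "J \<in> {J. interval J \<and> x \<in> J \<and> ilen J > 0}"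
  then have J: "interval J" "x \<in> J" "ilen J > 0" by auto
  have "emeasure (restr (sdot N W) Q) J / ennreal (ilen J)
     = (\<Sum>k. \<Sum>j<2^k. ennreal (sw k j) * indicator (Q \<inter> J) (ccenter N k j) / ennreal (ilen J))"
    by (simp only: restr_emeasure ennreal_suminf_divide[symmetric] sum_divide_ennreal)
  also have "\<dots> \<le> Tq Q x"
    unfolding Tq_def
  proof (intro suminf_le sum_mono)
    fix k j assume "j \<in> {..<(2::nat)^k}"
    then have d: "0 < \<bar>x - ccenter N k j\<bar>" using dist_pos by simp
    show "ennreal (sw k j) * indicator (Q \<inter> J) (ccenter N k j) / ennreal (ilen J)
       \<le> ennreal (sw k j) * (indicator Q (ccenter N k j) * ennreal (1 / \<bar>x - ccenter N k j\<bar>))"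
    proof (cases "ccenter N k j \<in> Q \<inter> J")
      case True
      have le: "\<bar>x - ccenter N k j\<bar> \<le> ilen J" using interval_dist_le[OF J(1,2)] True by simp
      have "sw k j / ilen J \<le> sw k j * (1 / \<bar>x - ccenter N k j\<bar>)"
        using le d J(3) sw_nonneg[of k j] by (simp add: divide_left_mono)
      then show ?thesis using True J(3) sw_nonneg[of k j]
        by (simp add: divide_ennreal ennreal_mult[symmetric] ennreal_leI)
    qed simp
  qed auto
  finally show "emeasure (restr (sdot N W) Q) J / ennreal (ilen J) \<le> Tq Q x" .
qed

lemma poisson_le_T:
  assumes I: "interval I" "x \<in> I"
  shows "poisson I (restr (sdot N W) I0) \<le> Tq I0 x"
proof -
  have "poisson I (restr (sdot N W) I0) = (\<Sum>k. \<Sum>j<2^k. ennreal (sw k j) *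
        (indicator I0 (ccenter N k j) * ennreal (ilen I / (ilen I + infdist (ccenter N k j) I)\<^sup>2)))"
    unfolding poisson_def restr_int sdot_int ..
  also have "\<dots> \<le> Tq I0 x"
    unfolding Tq_def
  proof (intro suminf_le sum_mono mult_left_mono)
    fix k j assume "j \<in> {..<(2::nat)^k}"
    then have d: "0 < \<bar>x - ccenter N k j\<bar>" using dist_pos by simp
    define c where "c = ccenter N k j"
    define L where "L = ilen I"
    define e where "e = infdist c I"
    have L0: "L \<ge> 0" using interval_dist_le[OF I(1,2,2)] L_def by simp
    have e0: "e \<ge> 0" unfolding e_def by (rule infdist_nonneg)
    have xc: "\<bar>x - c\<bar> \<le> L + e"
    proof -
      have "\<bar>x - c\<bar> - L \<le> e" unfolding e_def
      proof -
        have "I \<noteq> {}" using I by auto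
        moreover have "\<bar>x - c\<bar> - L \<le> dist c a" if "a \<in> I" for a
          using interval_dist_le[OF I(1) I(2) that] unfolding L_def dist_real_def by linarith
        ultimately show "\<bar>x - c\<bar> - L \<le> infdist c I"
          unfolding infdist_notempty[OF \<open>I \<noteq> {}\<close>] by (intro cINF_greatest) auto
      qed
      then show ?thesis by simp
    qed
    have "L / (L + e)^2 \<le> 1 / \<bar>x - c\<bar>"
    proof (cases "L + e = 0")
      case True then show ?thesis by simp
    next
      case False
      then have p: "L + e > 0" using L0 e0 by simp
      have "L / (L + e)^2 \<le> (L + e) / (L + e)^2" using p e0 by (intro divide_right_mono) auto
      also have "\<dots> = 1 / (L + e)" using p by (simp add: power2_eq_square)
      also have "\<dots> \<le> 1 / \<bar>x - c\<bar>" using xc d c_def by (intro divide_left_mono) auto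
      finally show ?thesis .
    qed
    then show "ennreal (ilen I / (ilen I + infdist (ccenter N k j) I)\<^sup>2)
        \<le> ennreal (1 / \<bar>x - ccenter N k j\<bar>)"
      unfolding c_def L_def e_def by (intro ennreal_leI)
  qed auto
  finally show ?thesis .
qed

end


lemma partA:
  assumes Q: "interval Q"
  shows "(\<integral>\<^sup>+ x \<in> Q. (maxfn (restr (sdot N W) Q) x)\<^sup>2 \<partial>W) \<le> ennreal 16 * emeasure (sdot N W) Q"
proof -
  have iQ: "is_interval Q" using Q unfolding interval_def by simp
  have "(\<integral>\<^sup>+ x \<in> Q. (maxfn (restr (sdot N W) Q) x)\<^sup>2 \<partial>W) \<le> (\<integral>\<^sup>+ x. 16 * Bq Q x \<partial>W)"
  proof (rule nn_integral_mono_AE)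
    show "AE x in W. (maxfn (restr (sdot N W) Q) x)\<^sup>2 * indicator Q x \<le> 16 * Bq Q x"
      using AE_E
    proof (rule eventually_mono)
      fix x assume xE: "x \<in> cantor_set N"
      show "(maxfn (restr (sdot N W) Q) x)\<^sup>2 * indicator Q x \<le> 16 * Bq Q x"
      proof (cases "x \<in> Q")
        case True
        have "(maxfn (restr (sdot N W) Q) x)\<^sup>2 \<le> (Tq Q x)^2"
          using max_le_T[OF xE True] by (intro power_mono) auto
        also have "\<dots> \<le> 16 * Bq Q x" by (rule MAIN[OF xE iQ True])
        finally show ?thesis using True by simp
      qed simp
    qed
  qed
  also have "\<dots> = 16 * (\<integral>\<^sup>+ x. Bq Q x \<partial>W)" by (rule nn_integral_cmult) measurable
  also have "\<dots> = ennreal 16 * emeasure (sdot N W) Q" by (simp add: Bq_int)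
  finally show ?thesis .
qed

lemma partB:
  assumes I0: "interval I0" and Ir: "\<forall>r\<ge>1. interval (I r)" and dj: "disjoint_family_on I {1..}"
    and U: "I0 = (\<Union>r\<in>{1..}. I r)"
  shows "infsum (\<lambda>r. emeasure W (I r) * (poisson (I r) (restr (sdot N W) I0))\<^sup>2) {1..}
         \<le> ennreal 16 * emeasure (sdot N W) I0"
proof -
  define f where "f r = emeasure W (I r) * (poisson (I r) (restr (sdot N W) I0))\<^sup>2" for r
  have iI0: "is_interval I0" using I0 unfolding interval_def by simp
  have each: "f r \<le> (\<integral>\<^sup>+ x. 16 * Bq I0 x * indicator (I r) x \<partial>W)" if r: "r \<ge> 1" for r
  proof -
    have Ir': "interval (I r)" using Ir r by simp
    have sets: "I r \<in> sets W" using Ir' setsW real_interval_borel_measurable unfolding interval_def by simp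
    have "f r = (\<integral>\<^sup>+ x. (poisson (I r) (restr (sdot N W) I0))\<^sup>2 * indicator (I r) x \<partial>W)"
      unfolding f_def using nn_integral_cmult_indicator[OF sets, of "(poisson (I r) (restr (sdot N W) I0))\<^sup>2"]
      by (simp add: mult.commute)
    also have "\<dots> \<le> (\<integral>\<^sup>+ x. 16 * Bq I0 x * indicator (I r) x \<partial>W)"
    proof (rule nn_integral_mono_AE)
      show "AE x in W. (poisson (I r) (restr (sdot N W) I0))\<^sup>2 * indicator (I r) x \<le> 16 * Bq I0 x * indicator (I r) x"
        using AE_E
      proof (rule eventually_mono)
        fix x assume xE: "x \<in> cantor_set N"
        show "(poisson (I r) (restr (sdot N W) I0))\<^sup>2 * indicator (I r) x \<le> 16 * Bq I0 x * indicator (I r) x"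
        proof (cases "x \<in> I r")
          case True
          have x0: "x \<in> I0" using U True r by auto
          have "(poisson (I r) (restr (sdot N W) I0))\<^sup>2 \<le> (Tq I0 x)^2"
            using poisson_le_T[OF xE Ir' True] by (intro power_mono) auto
          also have "\<dots> \<le> 16 * Bq I0 x" by (rule MAIN[OF xE iI0 x0])
          finally show ?thesis using True by simp
        qed simp
      qed
    qed
    finally show ?thesis .
  qed
  have fin: "sum f F \<le> ennreal 16 * emeasure (sdot N W) I0" if F: "finite F" "F \<subseteq> {1..}" for F
  proof -
    have "sum f F \<le> (\<Sum>r\<in>F. \<integral>\<^sup>+ x. 16 * Bq I0 x * indicator (I r) x \<partial>W)"
      using F each by (intro sum_mono) auto
    also have "\<dots> = (\<integral>\<^sup>+ x. (\<Sum>r\<in>F. 16 * Bq I0 x * indicator (I r) x) \<partial>W)"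
    proof (rule nn_integral_sum[symmetric])
      fix r assume "r \<in> F"
      then have "I r \<in> sets W" using F Ir setsW real_interval_borel_measurable unfolding interval_def by auto
      then show "(\<lambda>x. 16 * Bq I0 x * indicator (I r) x) \<in> borel_measurable W" by measurable
    qed
    also have "\<dots> \<le> (\<integral>\<^sup>+ x. 16 * Bq I0 x \<partial>W)"
    proof (rule nn_integral_mono)
      fix x
      have s1: "(\<Sum>r\<in>F. indicator (I r) x) \<le> (1::ennreal)"
      proof (cases "\<exists>r0\<in>F. x \<in> I r0")
        case True
        then obtain r0 where r0: "r0 \<in> F" "x \<in> I r0" by blast
        have "(\<Sum>r\<in>F. indicator (I r) x) = (\<Sum>r\<in>F. if r = r0 then (1::ennreal) else 0)"
        proof (rule sum.cong)
          fix r assume r: "r \<in> F"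
          show "indicator (I r) x = (if r = r0 then (1::ennreal) else 0)"
          proof (cases "r = r0")
            case False
            then have "I r \<inter> I r0 = {}" using dj r r0 F unfolding disjoint_family_on_def by auto
            then show ?thesis using False r0 by (auto simp: indicator_def)
          qed (use r0 in simp)
        qed simp
        also have "\<dots> = 1" using r0 F by simp
        finally show ?thesis by simp
      next
        case False
        then have "(\<Sum>r\<in>F. indicator (I r) x) = (0::ennreal)" by (intro sum.neutral) auto
        then show ?thesis by simp
      qed
      have "(\<Sum>r\<in>F. 16 * Bq I0 x * indicator (I r) x) = 16 * Bq I0 x * (\<Sum>r\<in>F. indicator (I r) x)"
        by (simp add: sum_distrib_left)
      also have "\<dots> \<le> 16 * Bq I0 x * 1" using s1 by (intro mult_left_mono) auto
      finally show "(\<Sum>r\<in>F. 16 * Bq I0 x * indicator (I r) x) \<le> 16 * Bq I0 x" by simp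
    qed
    also have "\<dots> = 16 * (\<integral>\<^sup>+ x. Bq I0 x \<partial>W)" by (rule nn_integral_cmult) measurable
    also have "\<dots> = ennreal 16 * emeasure (sdot N W) I0" by (simp add: Bq_int)
    finally show ?thesis .
  qed
  have "infsum f {1..} = (SUP F\<in>{F. finite F \<and> F \<subseteq> {1..}}. sum f F)"
    by (rule nonneg_infsum_complete) auto
  also have "\<dots> \<le> ennreal 16 * emeasure (sdot N W) I0"
    using fin by (intro SUP_least) auto
  finally show ?thesis unfolding f_def .
qed

end

theorem mainTheorem10:
  fixes N :: nat
  assumes "N \<ge> 16"
  shows "\<exists>C::real. \<forall>W. redist_cantor N W \<longrightarrow>
    (\<forall>Q. interval Q \<longrightarrow>
       (\<integral>\<^sup>+ x \<in> Q. (maxfn (restr (sdot N W) Q) x)\<^sup>2 \<partial>W)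
         \<le> ennreal C * emeasure (sdot N W) Q) \<and>
    (\<forall>I0 (I :: nat \<Rightarrow> real set).
       interval I0 \<and> (\<forall>r\<ge>1. interval (I r)) \<and> disjoint_family_on I {1..} \<and>
       I0 = (\<Union>r\<in>{1..}. I r) \<longrightarrow>
       infsum (\<lambda>r. emeasure W (I r) * (poisson (I r) (restr (sdot N W) I0))\<^sup>2) {1..}
         \<le> ennreal C * emeasure (sdot N W) I0)"
proof (intro exI[of _ 16] allI impI conjI)
  fix W Q assume RW: "redist_cantor N W" and Q: "interval Q"
  interpret cantorW N W using assms RW by (simp add: cantorW_def cantorN_def cantorW_axioms_def)
  show "(\<integral>\<^sup>+ x \<in> Q. (maxfn (restr (sdot N W) Q) x)\<^sup>2 \<partial>W) \<le> ennreal 16 * emeasure (sdot N W) Q"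
    using partA[OF Q] .
next
  fix W I0 and I :: "nat \<Rightarrow> real set"
  assume RW: "redist_cantor N W" and H: "interval I0 \<and> (\<forall>r\<ge>1. interval (I r)) \<and> disjoint_family_on I {1..} \<and>
       I0 = (\<Union>r\<in>{1..}. I r)"
  interpret cantorW N W using assms RW by (simp add: cantorW_def cantorN_def cantorW_axioms_def)
  show "infsum (\<lambda>r. emeasure W (I r) * (poisson (I r) (restr (sdot N W) I0))\<^sup>2) {1..}
         \<le> ennreal 16 * emeasure (sdot N W) I0"
    using H partB by blast
qed

end
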